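(* Let $M$ be a matroid on a finite ground set $E$ with rank function $r$, and $k>0$ an integer. Then $\vec S_k$ is $\mathcal F_k$-separable: for all $\vec r,\vec r\,'\in\vec S_k$ with $\vec r\le\vec r\,'$ such that $\mathcal F_k$ forces neither $\vec r$ nor $\overleftarrow{r'}$, there is $(X,Y)\in\vec S_k$ that is $\mathcal F_k$-linked to $\vec r$ and such that $(Y,X)$ is $\mathcal F_k$-linked to $\overleftarrow{r'}$.
   Context: $\vec U$ is the set of all ordered bipartitions $(X,Y)$ of $E$ ($X\cup Y=E$, $X\cap Y=\emptyset$, parts possibly empty), a universe of separations with $(X,Y)\le(X',Y')$ iff $X\subseteq X'$, involution $(X,Y)^*=(Y,X)$, $(X,Y)\vee(X',Y')=(X\cup X',Y\cap Y')$, $(X,Y)\wedge(X',Y')=(X\cap X',Y\cup Y')$. Write $\overleftarrow s=\vec s^{\,*}$. Let $\lambda(X)=r(X)+r(E\setminus X)-r(M)$ and $\vec S_k=\{(X,Y)\in\vec U:\lambda(X)<k\}$, with separations $s=\{\vec s,\overleftarrow s\}$. A star is a nonempty $\sigma\subseteq\vec U$ with $\vec r\le\overleftarrow s$ for all distinct $\vec r,\vec s\in\sigma$. For a star $\sigma=\{(A_i,B_i):i=0,\dots,n\}$ (distinct elements) let $\langle\sigma\rangle=\sum_{i=0}^n r(B_i)-n\,r(M)$; $\mathcal F_k$ is the set of stars $\sigma\subseteq\vec U$ with $\langle\sigma\rangle<k$ (these are subsets of $\vec S_k$). $s$ is degenerate if $\vec s=\overleftarrow s$; $\vec r\in\vec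 S_k$ is trivial if some separation $s$ of $\vec S_k$ has $\vec r<\vec s$, $\vec r<\overleftarrow s$; $\mathcal F_k$ forces $\vec r$ if $\{\overleftarrow r\}\in\mathcal F_k$ or $r$ is degenerate (unforced elements are nontrivial and nondegenerate). For nontrivial nondegenerate $\vec r$, $\vec S_{\ge\vec r}$ is the set of all orientations of separations of $\vec S_k$ having an orientation $\ge\vec r$; for $\vec s_0\ge\vec r$ the shifting map $f:\vec S_{\ge\vec r}\to\vec U$ is $f(\vec s)=\vec s\vee\vec s_0$, $f(\overleftarrow s)=(\vec s\vee\vec s_0)^*$ for all $\vec s\in\vec S_{\ge\vec r}\setminus\{\overleftarrow r\}$ with $\vec s\ge\vec r$. $\vec s_0$ is linked to $\vec r$ if $\vec s_0\ge\vec r$ and $\vec s\vee\vec s_0\in\vec S_k$ for all $\vec s\in\vec S_k$ with $\vec s\ge\vec r$, $\vec s\ne\overleftarrow r$; it is $\mathcal F_k$-linked to $\vec r$ if moreover $f(\sigma)\in\mathcal F_k$ for every star $\sigma\in\mathcal F_k$ with $\sigma\subseteq\vec S_{\ge\vec r}\setminus\{\overleftarrow r\}$ having an element $\ge\vec r$. *)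

theory Defs
  imports Main
begin

definition matroid_rank :: "'a set \<Rightarrow> ('a set \<Rightarrow> nat) \<Rightarrow> bool" where
  "matroid_rank E r \<longleftrightarrow> finite E \<and>
     (\<forall>X. X \<subseteq> E \<longrightarrow> r X \<le> card X) \<and>
     (\<forall>X Y. X \<subseteq> Y \<and> Y \<subseteq> E \<longrightarrow> r X \<le> r Y) \<and>
     (\<forall>X Y. X \<subseteq> E \<and> Y \<subseteq> E \<longrightarrow> r (X \<union> Y) + r (X \<inter> Y) \<le> r X + r Y)"

type_synonym 'a sep = "'a set \<times> 'a set"

definition U :: "'a set \<Rightarrow> 'a sep set" where
  "U E = {(X, Y). X \<union> Y = E \<and> X \<inter> Y = {}}"

definition sle :: "'a sep \<Rightarrow> 'a sep \<Rightarrow> bool" where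
  "sle s t \<longleftrightarrow> fst s \<subseteq> fst t"

definition sless :: "'a sep \<Rightarrow> 'a sep \<Rightarrow> bool" where
  "sless s t \<longleftrightarrow> sle s t \<and> s \<noteq> t"

definition sinv :: "'a sep \<Rightarrow> 'a sep" where
  "sinv s = (snd s, fst s)"

definition sjoin :: "'a sep \<Rightarrow> 'a sep \<Rightarrow> 'a sep" where
  "sjoin s t = (fst s \<union> fst t, snd s \<inter> snd t)"

definition conn :: "'a set \<Rightarrow> ('a set \<Rightarrow> nat) \<Rightarrow> 'a set \<Rightarrow> int" where
  "conn E r X = int (r X) + int (r (E - X)) - int (r E)"

definition Sk :: "'a set \<Rightarrow> ('a set \<Rightarrow> nat) \<Rightarrow> int \<Rightarrow> 'a sep set" where
  "Sk E r k = {s \<in> U E. conn E r (fst s) < k}"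

definition is_star :: "'a set \<Rightarrow> 'a sep set \<Rightarrow> bool" where
  "is_star E \<sigma> \<longleftrightarrow> \<sigma> \<noteq> {} \<and> \<sigma> \<subseteq> U E \<and>
     (\<forall>s\<in>\<sigma>. \<forall>t\<in>\<sigma>. s \<noteq> t \<longrightarrow> sle s (sinv t))"

text \<open>Star order: sum of r(B_i) minus n r(M), where the star has n+1 elements.\<close>
definition star_order :: "'a set \<Rightarrow> ('a set \<Rightarrow> nat) \<Rightarrow> 'a sep set \<Rightarrow> int" where
  "star_order E r \<sigma> = (\<Sum>s\<in>\<sigma>. int (r (snd s))) - (int (card \<sigma>) - 1) * int (r E)"

definition Fk :: "'a set \<Rightarrow> ('a set \<Rightarrow> nat) \<Rightarrow> int \<Rightarrow> 'a sep set set" where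
  "Fk E r k = {\<sigma>. is_star E \<sigma> \<and> star_order E r \<sigma> < k}"

definition degenerate :: "'a sep \<Rightarrow> bool" where
  "degenerate s \<longleftrightarrow> s = sinv s"

definition trivial :: "'a set \<Rightarrow> ('a set \<Rightarrow> nat) \<Rightarrow> int \<Rightarrow> 'a sep \<Rightarrow> bool" where
  "trivial E r k x \<longleftrightarrow> (\<exists>s\<in>Sk E r k. sless x s \<and> sless x (sinv s))"

definition forces :: "'a set \<Rightarrow> ('a set \<Rightarrow> nat) \<Rightarrow> int \<Rightarrow> 'a sep \<Rightarrow> bool" where
  "forces E r k x \<longleftrightarrow> {sinv x} \<in> Fk E r k \<or> degenerate x"

definition S_ge :: "'a set \<Rightarrow> ('a set \<Rightarrow> nat) \<Rightarrow> int \<Rightarrow> 'a sep \<Rightarrow> 'a sep set" where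
  "S_ge E r k x = {s \<in> Sk E r k. sle x s \<or> sle x (sinv s)}"

definition shift :: "'a sep \<Rightarrow> 'a sep \<Rightarrow> 'a sep \<Rightarrow> 'a sep" where
  "shift x s0 t = (if sle x t \<and> t \<noteq> sinv x then sjoin t s0 else sinv (sjoin (sinv t) s0))"

definition linked :: "'a set \<Rightarrow> ('a set \<Rightarrow> nat) \<Rightarrow> int \<Rightarrow> 'a sep \<Rightarrow> 'a sep \<Rightarrow> bool" where
  "linked E r k s0 x \<longleftrightarrow> sle x s0 \<and>
     (\<forall>s\<in>Sk E r k. sle x s \<and> s \<noteq> sinv x \<longrightarrow> sjoin s s0 \<in> Sk E r k)"

definition F_linked :: "'a set \<Rightarrow> ('a set \<Rightarrow> nat) \<Rightarrow> int \<Rightarrow> 'a sep \<Rightarrow> 'a sep \<Rightarrow> bool" where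
  "F_linked E r k s0 x \<longleftrightarrow> linked E r k s0 x \<and>
     (\<forall>\<sigma>\<in>Fk E r k. \<sigma> \<subseteq> S_ge E r k x - {sinv x} \<and> (\<exists>s\<in>\<sigma>. sle x s)
        \<longrightarrow> shift x s0 ` \<sigma> \<in> Fk E r k)"

end

theory Submission
  imports Defs
begin

lemma U_iff: "s \<in> U E \<longleftrightarrow> fst s \<union> snd s = E \<and> fst s \<inter> snd s = {}"
  by (cases s) (auto simp: U_def)

lemma mr_submod: "matroid_rank E r \<Longrightarrow> X \<subseteq> E \<Longrightarrow> Y \<subseteq> E \<Longrightarrow> r (X \<union> Y) + r (X \<inter> Y) \<le> r X + r Y"
  unfolding matroid_rank_def by blast

lemma mr_mono: "matroid_rank E r \<Longrightarrow> X \<subseteq> Y \<Longrightarrow> Y \<subseteq> E \<Longrightarrow> r X \<le> r Y"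
  unfolding matroid_rank_def by blast

lemma mr_empty: "matroid_rank E r \<Longrightarrow> r {} = 0"
  unfolding matroid_rank_def by (metis card.empty empty_subsetI le_zero_eq)

lemma finite_U: "finite E \<Longrightarrow> finite (U E)"
proof -
  assume "finite E"
  have "U E \<subseteq> Pow E \<times> Pow E" by (auto simp: U_def)
  then show ?thesis using \<open>finite E\<close> by (meson finite_Pow_iff finite_SigmaI finite_subset)
qed

lemma conn_submod:
  assumes mr: "matroid_rank E r" and S: "S \<subseteq> E" and X: "X \<subseteq> E"
  shows "conn E r (S \<union> X) + conn E r (S \<inter> X) \<le> conn E r S + conn E r X"
proof -
  have a: "r (S \<union> X) + r (S \<inter> X) \<le> r S + r X" using mr_submod[OF mr S X] .
  have b: "r ((E-S) \<union> (E-X)) + r ((E-S) \<inter> (E-X)) \<le> r (E-S) + r (E-X)"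
    using mr_submod[OF mr, of "E-S" "E-X"] by auto
  have e1: "E - (S \<union> X) = (E-S) \<inter> (E-X)" by auto
  have e2: "E - (S \<inter> X) = (E-S) \<union> (E-X)" by auto
  have a': "int (r (S \<union> X)) + int (r (S \<inter> X)) \<le> int (r S) + int (r X)" using a by linarith
  have b': "int (r ((E-S) \<union> (E-X))) + int (r ((E-S) \<inter> (E-X))) \<le> int (r (E-S)) + int (r (E-X))" using b by linarith
  show ?thesis unfolding conn_def e1 e2 using a' b' by linarith
qed

lemma so_eq: "finite \<sigma> \<Longrightarrow> star_order E r \<sigma> = (\<Sum>s\<in>\<sigma>. int (r (snd s)) - int (r E)) + int (r E)"
  by (simp add: star_order_def sum_subtractf algebra_simps)

lemma key:
  assumes mr: "matroid_rank E r" and fin: "finite T"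
    and TU: "\<forall>t\<in>T. fst t \<subseteq> E \<and> snd t = E - fst t"
    and st: "\<forall>t\<in>T. \<forall>u\<in>T. t \<noteq> u \<longrightarrow> fst t \<subseteq> snd u"
    and W: "W \<subseteq> E"
  shows "(\<Sum>t\<in>T. r (snd t \<union> W)) + r (W - \<Union>(fst ` T)) \<le> (\<Sum>t\<in>T. r (snd t)) + r W"
  using fin TU st W
proof (induction T arbitrary: W rule: finite_induct)
  case empty
  then show ?case by simp
next
  case (insert t T)
  have tE: "fst t \<subseteq> E" "snd t = E - fst t" using insert.prems by auto
  have W': "W \<inter> snd t \<subseteq> E" using insert.prems by auto
  have IH: "(\<Sum>u\<in>T. r (snd u \<union> (W \<inter> snd t))) + r ((W \<inter> snd t) - \<Union>(fst ` T)) \<le> (\<Sum>u\<in>T. r (snd u)) + r (W \<inter> snd t)"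
    using insert.IH[OF _ _ W'] insert.prems by auto
  have sm: "r (snd t \<union> W) + r (snd t \<inter> W) \<le> r (snd t) + r W"
    using mr_submod[OF mr, of "snd t" W] tE insert.prems by auto
  have eq1: "(\<Sum>u\<in>T. r (snd u \<union> (W \<inter> snd t))) = (\<Sum>u\<in>T. r (snd u \<union> W))"
  proof (rule sum.cong)
    fix u assume u: "u \<in> T"
    then have "u \<noteq> t" using insert.hyps by auto
    then have "fst t \<subseteq> snd u" using insert.prems u by auto
    then have "snd u \<union> (W \<inter> snd t) = snd u \<union> W" using tE insert.prems(3) by auto
    then show "r (snd u \<union> (W \<inter> snd t)) = r (snd u \<union> W)" by simp
  qed simp
  have eq2: "(W \<inter> snd t) - \<Union>(fst ` T) = W - \<Union>(fst ` insert t T)"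
    using tE insert.prems by auto
  have eq3: "snd t \<inter> W = W \<inter> snd t" by auto
  show ?case using IH sm insert.hyps unfolding eq1 eq2 eq3 by simp
qed

lemma F_linked_main:
  assumes mr: "matroid_rank E r" and k: "k > 0"
    and xU: "x \<in> U E" and nf: "\<not> forces E r k x"
    and s0U: "s0 \<in> U E" and xs0: "sle x s0"
    and minl: "\<forall>u\<in>U E. sle x u \<and> sle u s0 \<longrightarrow> conn E r (fst s0) \<le> conn E r (fst u)"
  shows "F_linked E r k s0 x"
proof -
  obtain X Y where x: "x = (X, Y)" by (cases x)
  obtain X0 Y0 where s0: "s0 = (X0, Y0)" by (cases s0)
  have XY: "X \<union> Y = E" "X \<inter> Y = {}" using xU x by (auto simp: U_def)
  have XY0: "X0 \<union> Y0 = E" "X0 \<inter> Y0 = {}" using s0U s0 by (auto simp: U_def)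
  have XX0: "X \<subseteq> X0" using xs0 x s0 by (simp add: sle_def)
  have finE: "finite E" using mr by (simp add: matroid_rank_def)
  have Xne: "X \<noteq> {}"
  proof
    assume X0e: "X = {}"
    have "is_star E {sinv x}" using xU x XY by (auto simp: is_star_def sinv_def U_def)
    moreover have "star_order E r {sinv x} = 0"
      using X0e mr_empty[OF mr] by (simp add: star_order_def sinv_def x)
    ultimately have "{sinv x} \<in> Fk E r k" using k by (simp add: Fk_def)
    then show False using nf by (simp add: forces_def)
  qed
  have minl': "\<And>A B. (A, B) \<in> U E \<Longrightarrow> X \<subseteq> A \<Longrightarrow> A \<subseteq> X0 \<Longrightarrow> conn E r X0 \<le> conn E r A"
  proof -
    fix A B assume "(A, B) \<in> U E" "X \<subseteq> A" "A \<subseteq> X0"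
    then show "conn E r X0 \<le> conn E r A" using minl x s0 unfolding sle_def by (metis fst_conv)
  qed
  have lk: "linked E r k s0 x"
    unfolding linked_def
  proof (intro conjI ballI impI)
    show "sle x s0" by fact
    fix s assume sS: "s \<in> Sk E r k" and "sle x s \<and> s \<noteq> sinv x"
    then have Xs: "X \<subseteq> fst s" using x by (simp add: sle_def)
    have sU: "fst s \<union> snd s = E" "fst s \<inter> snd s = {}" and ck: "conn E r (fst s) < k"
      using sS by (auto simp: Sk_def U_iff)
    have "(fst s \<inter> X0, snd s \<union> Y0) \<in> U E" using sU XY0 by (auto simp: U_def)
    then have c1: "conn E r X0 \<le> conn E r (fst s \<inter> X0)" using minl' Xs XX0 by auto
    have c2: "conn E r (fst s \<union> X0) + conn E r (fst s \<inter> X0) \<le> conn E r (fst s) + conn E r X0"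
      using conn_submod[OF mr, of "fst s" X0] sU XY0 by auto
    have "sjoin s s0 \<in> U E" using sU XY0 s0 by (auto simp: sjoin_def U_def)
    then show "sjoin s s0 \<in> Sk E r k" using c1 c2 ck s0 by (simp add: Sk_def sjoin_def)
  qed
  show ?thesis
    unfolding F_linked_def
  proof (intro conjI ballI impI)
    show "linked E r k s0 x" by fact
    fix \<sigma> assume sF: "\<sigma> \<in> Fk E r k" and hyp: "\<sigma> \<subseteq> S_ge E r k x - {sinv x} \<and> (\<exists>s\<in>\<sigma>. sle x s)"
    obtain s1 where s1: "s1 \<in> \<sigma>" "sle x s1" using hyp by blast
    have star: "is_star E \<sigma>" and ord: "star_order E r \<sigma> < k" using sF by (auto simp: Fk_def)
    have \<sigma>U: "\<sigma> \<subseteq> U E" using star by (simp add: is_star_def)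
    have fin\<sigma>: "finite \<sigma>" using \<sigma>U finite_U[OF finE] finite_subset by blast
    have stp: "\<And>t u. t \<in> \<sigma> \<Longrightarrow> u \<in> \<sigma> \<Longrightarrow> t \<noteq> u \<Longrightarrow> fst t \<subseteq> snd u"
      using star by (auto simp: is_star_def sle_def sinv_def)
    have uU: "\<And>t. t \<in> \<sigma> \<Longrightarrow> fst t \<union> snd t = E \<and> fst t \<inter> snd t = {}"
      using \<sigma>U U_iff by (meson subsetD)
    have s1nx: "s1 \<noteq> sinv x" using hyp s1 by auto
    have Xs1: "X \<subseteq> fst s1" using s1 x by (simp add: sle_def)
    define \<tau> where "\<tau> = \<sigma> - {s1}"
    have \<sigma>eq: "\<sigma> = insert s1 \<tau>" using s1 \<tau>_def by auto
    have fin\<tau>: "finite \<tau>" using fin\<sigma> \<tau>_def by auto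
    have nX: "\<And>t. t \<in> \<tau> \<Longrightarrow> \<not> sle x t"
    proof
      fix t assume t: "t \<in> \<tau>" and "sle x t"
      then have "X \<subseteq> fst t" using x by (simp add: sle_def)
      moreover have "fst t \<subseteq> snd s1" using stp[of t s1] t s1 \<tau>_def by auto
      ultimately show False using Xs1 uU[OF s1(1)] Xne by auto
    qed
    define g where "g t = (fst t \<inter> Y0, snd t \<union> X0)" for t :: "'a sep"
    define a where "a = (fst s1 \<union> X0, snd s1 \<inter> Y0)"
    have sh1: "shift x s0 s1 = a" using s1 s1nx by (simp add: shift_def a_def sjoin_def s0)
    have sht: "\<And>t. t \<in> \<tau> \<Longrightarrow> shift x s0 t = g t"
      using nX by (simp add: shift_def g_def sjoin_def sinv_def s0)
    have img: "shift x s0 ` \<sigma> = insert a (g ` \<tau>)"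
      using sh1 sht \<sigma>eq by auto
    have \<tau>1: "\<And>t. t \<in> \<tau> \<Longrightarrow> fst t \<subseteq> snd s1 \<and> fst s1 \<subseteq> snd t \<and> t \<in> \<sigma>"
    proof -
      fix t assume "t \<in> \<tau>"
      then have "t \<in> \<sigma>" "t \<noteq> s1" using \<tau>_def by auto
      then show "fst t \<subseteq> snd s1 \<and> fst s1 \<subseteq> snd t \<and> t \<in> \<sigma>"
        using stp[of t s1] stp[of s1 t] s1(1) by auto
    qed
    have \<tau>2: "\<And>t u. t \<in> \<tau> \<Longrightarrow> u \<in> \<tau> \<Longrightarrow> t \<noteq> u \<Longrightarrow> fst t \<subseteq> snd u"
      using stp unfolding \<tau>_def by blast
    have aU: "a \<in> U E" using uU[OF s1(1)] XY0 by (auto simp: a_def U_def)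
    have gU: "\<And>t. t \<in> \<tau> \<Longrightarrow> g t \<in> U E"
      using uU \<tau>1 XY0 by (fastforce simp: g_def U_def)
    have anot: "a \<notin> g ` \<tau>"
    proof
      assume "a \<in> g ` \<tau>"
      then obtain t where t: "t \<in> \<tau>" "a = g t" by auto
      have "fst a \<subseteq> snd a" using t \<tau>1[OF t(1)] by (auto simp: a_def g_def)
      moreover have "fst a \<inter> snd a = {}" using aU by (simp add: U_iff)
      ultimately have "fst a = {}" by auto
      then show False using Xs1 Xne by (auto simp: a_def)
    qed
    have is_st: "is_star E (insert a (g ` \<tau>))"
      unfolding is_star_def
    proof (intro conjI ballI impI)
      show "insert a (g ` \<tau>) \<noteq> {}" by simp
      show "insert a (g ` \<tau>) \<subseteq> U E" using aU gU by auto
      fix p q assume p: "p \<in> insert a (g ` \<tau>)" and q: "q \<in> insert a (g ` \<tau>)" and pq: "p \<noteq> q"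
      show "sle p (sinv q)"
      proof (cases "p = a")
        case True
        then obtain u where u: "u \<in> \<tau>" "q = g u" using q pq by auto
        then show ?thesis using True \<tau>1[OF u(1)] by (auto simp: sle_def sinv_def a_def g_def)
      next
        case False
        then obtain t where t: "t \<in> \<tau>" "p = g t" using p by auto
        show ?thesis
        proof (cases "q = a")
          case True
          then show ?thesis using t \<tau>1[OF t(1)] by (auto simp: sle_def sinv_def a_def g_def)
        next
          case False
          then obtain u where u: "u \<in> \<tau>" "q = g u" using q by auto
          then have "t \<noteq> u" using t pq by auto
          then show ?thesis using t u \<tau>2[OF t(1) u(1)] by (auto simp: sle_def sinv_def g_def)
        qed
      qed
    qed
    define H where "H s = int (r (snd s)) - int (r E)" for s :: "'a sep"
    have reidx: "(\<Sum>y\<in>g ` \<tau>. H y) = (\<Sum>t\<in>\<tau>. H (g t))"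
    proof -
      have "(\<Sum>y\<in>g ` \<tau>. H y) = sum (H \<circ> g) \<tau>"
      proof (rule sum.reindex_nontrivial[OF fin\<tau>])
        fix t u assume t: "t \<in> \<tau>" and u: "u \<in> \<tau>" and tu: "t \<noteq> u" and e: "g t = g u"
        have "fst (g t) \<subseteq> snd (g u)" using \<tau>2[OF t u tu] by (auto simp: g_def)
        then have "fst (g t) \<subseteq> snd (g t)" using e by simp
        moreover have "fst (g t) \<union> snd (g t) = E \<and> fst (g t) \<inter> snd (g t) = {}" using gU[OF t] by (simp add: U_iff)
        ultimately have "snd (g t) = E" by auto
        then show "H (g t) = 0" by (simp add: H_def)
      qed
      then show ?thesis by simp
    qed
    have so1: "star_order E r (insert a (g ` \<tau>)) = H a + (\<Sum>t\<in>\<tau>. H (g t)) + int (r E)"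
      using so_eq[of "insert a (g ` \<tau>)" E r] fin\<tau> anot reidx by (simp add: H_def)
    have s1t: "s1 \<notin> \<tau>" using \<tau>_def by auto
    have so2: "star_order E r \<sigma> = H s1 + (\<Sum>t\<in>\<tau>. H t) + int (r E)"
      using so_eq[of \<sigma> E r] fin\<tau> s1t \<sigma>eq fin\<sigma> by (simp add: H_def)
    define C where "C = \<Union>(fst ` \<tau>)"
    have tE: "\<And>t. t \<in> \<tau> \<Longrightarrow> fst t \<subseteq> E \<and> snd t = E - fst t"
    proof -
      fix t assume "t \<in> \<tau>"
      then have "fst t \<union> snd t = E \<and> fst t \<inter> snd t = {}" using \<tau>1 uU by blast
      then show "fst t \<subseteq> E \<and> snd t = E - fst t" by blast
    qed
    have CE: "C \<subseteq> E" unfolding C_def using tE by blast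
    have CB1: "C \<subseteq> snd s1" using \<tau>1 by (auto simp: C_def)
    have Y0E: "Y0 \<subseteq> E" "X0 \<subseteq> E" using XY0 by auto
    have B1E: "snd s1 \<subseteq> E" using uU[OF s1(1)] by auto
    have i1: "r (snd s1 \<inter> Y0) + r (snd s1 \<union> Y0) \<le> r (snd s1) + r Y0"
      using mr_submod[OF mr B1E Y0E(1)] by linarith
    have i2: "(\<Sum>t\<in>\<tau>. r (snd t \<union> X0)) + r (X0 - C) \<le> (\<Sum>t\<in>\<tau>. r (snd t)) + r X0"
      unfolding C_def
    proof (rule key[OF mr fin\<tau> _ _ Y0E(2)])
      show "\<forall>t\<in>\<tau>. fst t \<subseteq> E \<and> snd t = E - fst t" using tE by blast
      show "\<forall>t\<in>\<tau>. \<forall>u\<in>\<tau>. t \<noteq> u \<longrightarrow> fst t \<subseteq> snd u" using \<tau>2 by blast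
    qed
    have i3: "conn E r X0 \<le> conn E r (X0 - C)"
    proof (rule minl')
      show "(X0 - C, Y0 \<union> C) \<in> U E" using XY0 CE by (auto simp: U_def)
      show "X \<subseteq> X0 - C" using XX0 Xs1 CB1 uU[OF s1(1)] by auto
    qed simp
    have eY0: "E - X0 = Y0" using XY0 by auto
    have eC: "E - (X0 - C) = Y0 \<union> C" using XY0 CE by auto
    have i3': "int (r X0) + int (r Y0) \<le> int (r (X0 - C)) + int (r (Y0 \<union> C))"
      using i3 unfolding conn_def eY0 eC by linarith
    have i4: "r (Y0 \<union> C) \<le> r (snd s1 \<union> Y0)"
      using mr_mono[OF mr, of "Y0 \<union> C" "snd s1 \<union> Y0"] CB1 B1E Y0E by auto
    have ineq: "r (snd s1 \<inter> Y0) + (\<Sum>t\<in>\<tau>. r (snd t \<union> X0)) \<le> r (snd s1) + (\<Sum>t\<in>\<tau>. r (snd t))"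
      using i1 i2 i3' i4 by linarith
    have h1: "(\<Sum>t\<in>\<tau>. H (g t)) = int (\<Sum>t\<in>\<tau>. r (snd t \<union> X0)) - int (card \<tau>) * int (r E)"
      by (simp add: H_def g_def sum_subtractf of_nat_sum)
    have h2: "(\<Sum>t\<in>\<tau>. H t) = int (\<Sum>t\<in>\<tau>. r (snd t)) - int (card \<tau>) * int (r E)"
      by (simp add: H_def sum_subtractf of_nat_sum)
    have "star_order E r (insert a (g ` \<tau>)) \<le> star_order E r \<sigma>"
    proof -
      have ineq': "int (r (snd s1 \<inter> Y0)) + int (\<Sum>t\<in>\<tau>. r (snd t \<union> X0)) \<le> int (r (snd s1)) + int (\<Sum>t\<in>\<tau>. r (snd t))"
        using ineq by linarith
      show ?thesis unfolding so1 so2 h1 h2 unfolding H_def a_def snd_conv using ineq' by linarith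
    qed
    then have "star_order E r (insert a (g ` \<tau>)) < k" using ord by linarith
    then show "shift x s0 ` \<sigma> \<in> Fk E r k" unfolding img using is_st by (simp add: Fk_def)
  qed
qed

theorem lemma5p15:
  fixes E :: "'a set" and r :: "'a set \<Rightarrow> nat" and k :: int
  assumes "matroid_rank E r" and "k > 0"
  shows "\<forall>x\<in>Sk E r k. \<forall>x'\<in>Sk E r k.
           sle x x' \<and> \<not> forces E r k x \<and> \<not> forces E r k (sinv x') \<longrightarrow>
           (\<exists>X Y. (X, Y) \<in> Sk E r k \<and> F_linked E r k (X, Y) x \<and> F_linked E r k (Y, X) (sinv x'))"
proof (intro ballI impI)
  fix x x' assume xS: "x \<in> Sk E r k" and x'S: "x' \<in> Sk E r k"
    and h: "sle x x' \<and> \<not> forces E r k x \<and> \<not> forces E r k (sinv x')"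
  have finE: "finite E" using assms(1) by (simp add: matroid_rank_def)
  have xU: "x \<in> U E" and x'U: "x' \<in> U E" using xS x'S by (auto simp: Sk_def)
  define A where "A = {u \<in> U E. sle x u \<and> sle u x'}"
  have finA: "finite A" using finite_U[OF finE] by (simp add: A_def)
  have xA: "x \<in> A" using xU h by (simp add: A_def sle_def)
  define s0 where "s0 = arg_min_on (\<lambda>u. conn E r (fst u)) A"
  have s0A: "s0 \<in> A" and s0m: "\<not>(\<exists>u\<in>A. conn E r (fst u) < conn E r (fst s0))"
    using arg_min_if_finite[OF finA, of "\<lambda>u. conn E r (fst u)"] xA unfolding s0_def by auto
  have s0U: "s0 \<in> U E" and xs0: "sle x s0" and s0x': "sle s0 x'" using s0A by (auto simp: A_def)
  have cU: "\<And>u. u \<in> U E \<Longrightarrow> conn E r (fst u) = conn E r (snd u)"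
  proof -
    fix u assume "u \<in> U E"
    then have "E - fst u = snd u" "E - snd u = fst u" by (auto simp: U_iff)
    then show "conn E r (fst u) = conn E r (snd u)" by (simp add: conn_def)
  qed
  have s0S: "s0 \<in> Sk E r k"
  proof -
    have "conn E r (fst s0) \<le> conn E r (fst x)" using s0m xA by fastforce
    then show ?thesis using xS s0U by (simp add: Sk_def)
  qed
  have L1: "F_linked E r k s0 x"
  proof (rule F_linked_main[OF assms xU _ s0U xs0])
    show "\<not> forces E r k x" using h by simp
    show "\<forall>u\<in>U E. sle x u \<and> sle u s0 \<longrightarrow> conn E r (fst s0) \<le> conn E r (fst u)"
    proof (intro ballI impI)
      fix u assume "u \<in> U E" "sle x u \<and> sle u s0"
      then have "u \<in> A" using s0x' by (auto simp: A_def sle_def)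
      then show "conn E r (fst s0) \<le> conn E r (fst u)" using s0m by fastforce
    qed
  qed
  have sinvU: "\<And>u. u \<in> U E \<Longrightarrow> sinv u \<in> U E" by (auto simp: U_iff sinv_def)
  have sle_inv: "\<And>u v. u \<in> U E \<Longrightarrow> v \<in> U E \<Longrightarrow> sle (sinv u) (sinv v) \<longleftrightarrow> sle v u"
    by (auto simp: U_iff sle_def sinv_def)
  have L2: "F_linked E r k (sinv s0) (sinv x')"
  proof (rule F_linked_main[OF assms sinvU[OF x'U] _ sinvU[OF s0U]])
    show "\<not> forces E r k (sinv x')" using h by simp
    show "sle (sinv x') (sinv s0)" using sle_inv[OF x'U s0U] s0x' by simp
    show "\<forall>u\<in>U E. sle (sinv x') u \<and> sle u (sinv s0) \<longrightarrow> conn E r (fst (sinv s0)) \<le> conn E r (fst u)"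
    proof (intro ballI impI)
      fix u assume uU: "u \<in> U E" and hu: "sle (sinv x') u \<and> sle u (sinv s0)"
      have iu: "sinv (sinv u) = u" by (simp add: sinv_def)
      have "sle (sinv u) x'" using sle_inv[OF x'U sinvU[OF uU]] hu iu by simp
      moreover have "sle s0 (sinv u)" using sle_inv[OF sinvU[OF uU] s0U] hu iu by simp
      ultimately have "sinv u \<in> A" using sinvU[OF uU] xs0 by (auto simp: A_def sle_def)
      then have "conn E r (fst s0) \<le> conn E r (fst (sinv u))" using s0m by fastforce
      then show "conn E r (fst (sinv s0)) \<le> conn E r (fst u)"
        using cU[OF uU] cU[OF s0U] by (simp add: sinv_def)
    qed
  qed
  obtain X Y where s0e: "s0 = (X, Y)" by (cases s0)
  show "\<exists>X Y. (X, Y) \<in> Sk E r k \<and> F_linked E r k (X, Y) x \<and> F_linked E r k (Y, X) (sinv x')"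
    using s0S L1 L2 s0e by (auto simp: sinv_def)
qed

end
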